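(* Fix a constant $c>0$. The class $\mathcal{A}_c$ of bucket-based sorting algorithms, viewed as functions on arrays $x\in\mathbb{R}^n$ via $x\mapsto\mathrm{cost}(A,x)$ (the number of comparisons used by $A$ on $x$), has pseudo-dimension $O(n^{1+c})$.
   Context: A bucket-based sorting algorithm in $\mathcal{A}_c$ (for sorting $n$ reals $a_1,\dots,a_n$ in the comparison model) is specified by: (i) $n$ bucket boundaries $b_1<b_2<\dots<b_n$; (ii) for each $i=1,\dots,n$, a search tree $T_i$ described by $O(n^c)$ bits used to place element $a_i$ into its correct bucket (a search not resolved by $T_i$ is completed by standard binary search over the buckets). The algorithm distributes each element into its bucket this way, sorts each bucket with InsertionSort, and concatenates. Pseudo-dimension: a finite set $\{x_1,\dots,x_m\}$ is shattered by a class $\mathcal{H}$ of real functions if there exist reals $r_i$ such that for every $T\subseteq\{1,\dots,m\}$ some $h\in\mathcal{H}$ has $h(x_i)>r_i\iff i\in T$; the pseudo-dimension is the largest size of a shattered set. *)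

theory Defs
  imports Complex_Main "HOL-Library.Extended_Real"
begin

definition shatters :: "('a \<Rightarrow> real) set \<Rightarrow> 'a set \<Rightarrow> bool" where
  "shatters H X \<longleftrightarrow> finite X \<and>
     (\<exists>r :: 'a \<Rightarrow> real. \<forall>T \<subseteq> X. \<exists>h \<in> H. \<forall>x \<in> X. (h x > r x \<longleftrightarrow> x \<in> T))"

definition pseudo_dim :: "'a set \<Rightarrow> ('a \<Rightarrow> real) set \<Rightarrow> ereal" where
  "pseudo_dim D H = (SUP X \<in> {X. X \<subseteq> D \<and> shatters H X}. ereal (real (card X)))"

text \<open>Boundaries are a strictly increasing list b of length n; boundary j (1 \<le> j \<le> n)
  is b ! (j - 1). Bucket k (0 \<le> k \<le> n) consists of reals a with b_k \<le> a < b_(k+1),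
  where b_0 = -\<infinity> and b_(n+1) = +\<infinity>.\<close>

text \<open>Standard binary search over the candidate buckets lo..hi; returns
  (number of comparisons, bucket found).\<close>
function bsearch :: "real list \<Rightarrow> real \<Rightarrow> nat \<Rightarrow> nat \<Rightarrow> nat \<times> nat" where
  "bsearch b a lo hi =
     (if hi \<le> lo then (0, lo)
      else (let m = (lo + hi + 1) div 2 in
            if a < b ! (m - 1)
            then (let (c, k) = bsearch b a lo (m - 1) in (c + 1, k))
            else (let (c, k) = bsearch b a m hi in (c + 1, k))))"
  by pat_completeness auto
termination
  by (relation "measure (\<lambda>(b, a, lo, hi). hi - lo)") auto

text \<open>Search trees: an internal node SNode j l r compares the element with boundary j
  (go left if smaller); reaching a leaf, the search is completed by binary search over
  the buckets still compatible with the comparisons made (zero extra cost if resolved).\<close>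
datatype stree = SLeaf | SNode nat stree stree

fun labels :: "stree \<Rightarrow> nat set" where
  "labels SLeaf = {}"
| "labels (SNode j l r) = insert j (labels l \<union> labels r)"

fun tsearch :: "real list \<Rightarrow> real \<Rightarrow> stree \<Rightarrow> nat \<Rightarrow> nat \<Rightarrow> nat \<times> nat" where
  "tsearch b a SLeaf lo hi = bsearch b a lo hi"
| "tsearch b a (SNode j l r) lo hi =
     (if a < b ! (j - 1)
      then (let (c, k) = tsearch b a l lo (min hi (j - 1)) in (c + 1, k))
      else (let (c, k) = tsearch b a r (max lo j) hi in (c + 1, k)))"

text \<open>InsertionSort comparison count: insert each element into the sorted prefix,
  scanning the prefix from its right end.\<close>
fun ins_cost :: "real \<Rightarrow> real list \<Rightarrow> nat" where
  "ins_cost x [] = 0"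
| "ins_cost x (r # rs) = 1 + (if r > x then ins_cost x rs else 0)"

fun isort_aux :: "real list \<Rightarrow> real list \<Rightarrow> nat" where
  "isort_aux s [] = 0"
| "isort_aux s (x # xs) = ins_cost x (rev s) + isort_aux (insort x s) xs"

definition isort_cost :: "real list \<Rightarrow> nat" where
  "isort_cost xs = isort_aux [] xs"

text \<open>An algorithm is a pair (boundaries, list of n search trees).
  cost A x = comparisons for distributing every x_i with T_i, plus comparisons of
  InsertionSort on every bucket (elements in a bucket kept in input order).\<close>
type_synonym bucket_alg = "real list \<times> stree list"

definition cost :: "bucket_alg \<Rightarrow> real list \<Rightarrow> nat" where
  "cost A x =
    (let (b, Ts) = A; n = length b;
         srch = (\<lambda>i. tsearch b (x ! i) (Ts ! i) 0 n)
     in (\<Sum>i<n. fst (srch i))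
        + (\<Sum>k\<le>n. isort_cost [x ! i. i \<leftarrow> [0..<n], snd (srch i) = k]))"

text \<open>The class A_c for arrays of size n: each tree T_i is described (under a fixed
  injective description scheme enc into bit strings) by at most K * n^c bits.\<close>
definition alg_class :: "(stree \<Rightarrow> bool list) \<Rightarrow> real \<Rightarrow> real \<Rightarrow> nat \<Rightarrow> bucket_alg set" where
  "alg_class enc K c n =
     {(b, Ts). length b = n \<and> sorted_wrt (<) b \<and> length Ts = n \<and>
        (\<forall>T \<in> set Ts. labels T \<subseteq> {1..n} \<and> real (length (enc T)) \<le> K * real n powr c)}"

definition cost_class :: "(stree \<Rightarrow> bool list) \<Rightarrow> real \<Rightarrow> real \<Rightarrow> nat \<Rightarrow> (real list \<Rightarrow> real) set" where
  "cost_class enc K c n = (\<lambda>A x. real (cost A x)) ` alg_class enc K c n"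

end

theory Submission
  imports Defs
begin

lemma bsearch_cong:
  "\<forall>j. 0 < j \<and> j \<le> n \<longrightarrow> (a < b!(j-1)) = (a < b'!(j-1)) \<Longrightarrow> hi \<le> n \<Longrightarrow> bsearch b a lo hi = bsearch b' a lo hi"
proof (induction b a lo hi rule: bsearch.induct)
  case (1 b a lo hi)
  show ?case
  proof (cases "hi \<le> lo")
    case True
    then show ?thesis by (subst (1 2) bsearch.simps) (simp del: bsearch.simps)
  next
    case False
    define m where "m = (lo + hi + 1) div 2"
    have m: "0 < m" "m \<le> n" "m - 1 < hi" "m \<le> hi" using False "1.prems" unfolding m_def by auto
    have eq: "(a < b!(m-1)) = (a < b'!(m-1))" using "1.prems"(1) m by blast
    have IH1: "a < b!(m-1) \<Longrightarrow> bsearch b a lo (m - 1) = bsearch b' a lo (m - 1)"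
      using "1.IH"(1)[OF False m_def] "1.prems" m by (simp del: bsearch.simps)
    have IH2: "\<not> a < b!(m-1) \<Longrightarrow> bsearch b a m hi = bsearch b' a m hi"
      using "1.IH"(2)[OF False m_def] "1.prems" m by (simp del: bsearch.simps)
    show ?thesis
      apply (subst (1 2) bsearch.simps)
      using False eq IH1 IH2 unfolding m_def by (cases "a < b!(m-1)") (simp_all add: m_def Let_def del: bsearch.simps)
  qed
qed

lemma tsearch_cong:
  "\<forall>j. 0 < j \<and> j \<le> n \<longrightarrow> (a < b!(j-1)) = (a < b'!(j-1)) \<Longrightarrow> hi \<le> n \<Longrightarrow> labels T \<subseteq> {1..n}
   \<Longrightarrow> tsearch b a T lo hi = tsearch b' a T lo hi"
proof (induction T arbitrary: lo hi)
  case SLeaf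
  then show ?case using bsearch_cong by (simp del: bsearch.simps)
next
  case (SNode j l r)
  have j: "0 < j" "j \<le> n" using SNode.prems by auto
  have eq: "(a < b!(j-1)) = (a < b'!(j-1))" using SNode.prems(1) j by blast
  have "tsearch b a l lo (min hi (j - 1)) = tsearch b' a l lo (min hi (j - 1))"
    using SNode by simp
  moreover have "tsearch b a r (max lo j) hi = tsearch b' a r (max lo j) hi"
    using SNode by simp
  ultimately show ?case using eq by simp
qed

lemma cost_cong:
  assumes "length b = n" "length b' = n" "set x \<subseteq> V" "length x = n"
    "\<forall>v\<in>V. \<forall>j<n. (v < b!j) = (v < b'!j)" "\<forall>T\<in>set Ts. labels T \<subseteq> {1..n}" "length Ts = n"
  shows "cost (b,Ts) x = cost (b',Ts) x"
proof -
  have s: "tsearch b (x!i) (Ts!i) 0 n = tsearch b' (x!i) (Ts!i) 0 n" if "i < n" for i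
  proof (rule tsearch_cong)
    have "x!i \<in> V" using assms(3,4) that nth_mem by blast
    then show "\<forall>j. 0 < j \<and> j \<le> n \<longrightarrow> (x!i < b!(j-1)) = (x!i < b'!(j-1))"
      using assms(5) by auto
    show "labels (Ts!i) \<subseteq> {1..n}" using assms(6,7) that nth_mem by blast
  qed simp
  have l: "[x ! i. i \<leftarrow> [0..<n], snd (tsearch b (x!i) (Ts!i) 0 n) = k]
        = [x ! i. i \<leftarrow> [0..<n], snd (tsearch b' (x!i) (Ts!i) 0 n) = k]" for k
    by (rule arg_cong[where f=concat], rule map_cong) (auto simp: s)
  show ?thesis unfolding cost_def using assms(1,2) l s by (simp add: Let_def)
qed

lemma card_downsets:
  fixes V :: "real set"
  assumes "finite V"
  shows "card {{v\<in>V. v < t} | t. True} \<le> card V + 1"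
proof -
  let ?D = "{{v\<in>V. v < t} | t. True}"
  have inj: "inj_on card ?D"
  proof (rule inj_onI)
    fix A B assume "A \<in> ?D" "B \<in> ?D" "card A = card B"
    then obtain s t where A: "A = {v\<in>V. v < s}" and B: "B = {v\<in>V. v < t}" by auto
    show "A = B"
    proof (cases "s \<le> t")
      case True
      then have "A \<subseteq> B" using A B by auto
      then show ?thesis using card_subset_eq[of B A] \<open>card A = card B\<close> B assms by auto
    next
      case False
      then have "B \<subseteq> A" using A B by auto
      then show ?thesis using card_subset_eq[of A B] \<open>card A = card B\<close> A assms by auto
    qed
  qed
  have "card ` ?D \<subseteq> {..card V}"
  proof
    fix k assume "k \<in> card ` ?D"
    then obtain t where k: "k = card {v\<in>V. v < t}" by auto
    have "card {v\<in>V. v < t} \<le> card V" by (rule card_mono) (use assms in auto)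
    then show "k \<in> {..card V}" using k by simp
  qed
  note sub = this
  have "card (card ` ?D) \<le> card V + 1"
    using card_mono[OF finite_atMost sub] by simp
  then show ?thesis using card_image[OF inj] by simp
qed

lemma card_small_trees:
  fixes enc :: "stree \<Rightarrow> bool list"
  assumes "inj enc"
  shows "finite {T. length (enc T) \<le> L} \<and> card {T. length (enc T) \<le> L} \<le> 4 ^ L"
proof -
  let ?B = "{bs::bool list. length bs \<le> L}"
  have B: "?B = (\<Union>k\<in>{..L}. {bs. set bs \<subseteq> UNIV \<and> length bs = k})" by auto
  have finB: "finite ?B" unfolding B using finite_lists_length_eq[of "UNIV::bool set"] by auto
  have "card ?B \<le> (\<Sum>k\<in>{..L}. card {bs::bool list. set bs \<subseteq> UNIV \<and> length bs = k})"
    unfolding B by (rule card_UN_le) simp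
  also have "\<dots> = (\<Sum>k\<in>{..L}. 2 ^ k)" using card_lists_length_eq[of "UNIV::bool set"] by (simp add: card_UNIV_bool)
  also have "\<dots> \<le> card {..L} * 2 ^ L"
    using sum_bounded_above[of "{..L}" "\<lambda>k. (2::nat)^k" "2^L"] by (simp add: power_increasing)
  also have "\<dots> \<le> 2 ^ L * 2 ^ L"
  proof -
    have "card {..L} \<le> 2 ^ L" using less_exp[of L] by (simp add: Suc_le_eq)
    then show ?thesis by (rule mult_right_mono) simp
  qed
  also have "\<dots> = 4 ^ L" by (simp add: power_mult_distrib[symmetric])
  finally have cB: "card ?B \<le> 4 ^ L" .
  let ?T = "{T. length (enc T) \<le> L}"
  have sub: "enc ` ?T \<subseteq> ?B" by auto
  have inj': "inj_on enc ?T" using assms by (simp add: inj_on_def inj_def)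
  have "finite (enc ` ?T)" using finite_subset[OF sub finB] .
  then have fin: "finite ?T" using finite_imageD[OF _ inj'] by blast
  have "card ?T = card (enc ` ?T)" using card_image[OF inj'] by simp
  also have "\<dots> \<le> card ?B" using card_mono[OF finB sub] .
  finally show ?thesis using fin cB by simp
qed

lemma shatter_count:
  fixes enc :: "stree \<Rightarrow> bool list" and X :: "real list set"
  assumes inj: "inj enc" and Xn: "X \<subseteq> {x. length x = n}"
    and sh: "shatters (cost_class enc K c n) X"
  shows "2 ^ card X \<le> (4 ^ nat \<lfloor>K * real n powr c\<rfloor>) ^ n * (card X * n + 1) ^ n"
proof -
  define L where "L = nat \<lfloor>K * real n powr c\<rfloor>"
  define alg where "alg = alg_class enc K c n"
  from sh have finX: "finite X" unfolding shatters_def by blast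
  from sh obtain r where r: "\<forall>T \<subseteq> X. \<exists>h \<in> cost_class enc K c n. \<forall>x \<in> X. (h x > r x \<longleftrightarrow> x \<in> T)"
    unfolding shatters_def by blast
  define V where "V = \<Union> (set ` X)"
  have finV: "finite V" unfolding V_def using finX by auto
  have "card V \<le> (\<Sum>x\<in>X. card (set x))" unfolding V_def by (rule card_UN_le[OF finX])
  also have "\<dots> \<le> (\<Sum>x\<in>X. n)" 
    by (rule sum_mono) (use Xn card_length in fastforce)
  also have "\<dots> = card X * n" by simp
  finally have cV: "card V \<le> card X * n" .
  define Tr where "Tr = {T. length (enc T) \<le> L}"
  have Tr: "finite Tr" "card Tr \<le> 4 ^ L" using card_small_trees[OF inj, of L] unfolding Tr_def by auto
  define D where "D = {{v\<in>V. v < t} | t. True}"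
  have cD: "card D \<le> card V + 1" unfolding D_def by (rule card_downsets[OF finV])
  have finD: "finite D"
  proof -
    have "D \<subseteq> Pow V" unfolding D_def by auto
    then show ?thesis using finV finite_subset by blast
  qed
  define S where "S = {Ts. set Ts \<subseteq> Tr \<and> length Ts = n} \<times> {ps. set ps \<subseteq> D \<and> length ps = n}"
  have finS: "finite S" unfolding S_def using Tr finD by (simp add: finite_lists_length_eq)
  have "card S = card Tr ^ n * card D ^ n" unfolding S_def using Tr finD
    by (simp add: card_cartesian_product card_lists_length_eq)
  also have "\<dots> \<le> (4 ^ L) ^ n * (card X * n + 1) ^ n"
    using Tr cD cV by (intro mult_mono power_mono) auto
  finally have cS: "card S \<le> (4 ^ L) ^ n * (card X * n + 1) ^ n" .
  define sig where "sig = (\<lambda>A::bucket_alg. (snd A, map (\<lambda>j. {v\<in>V. v < fst A ! j}) [0..<n]))"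
  define g where "g = (\<lambda>A::bucket_alg. (\<lambda>x. if x \<in> X then real (cost A x) else 0))"
  have sigS: "sig A \<in> S" if "A \<in> alg" for A
  proof -
    obtain b Ts where A: "A = (b, Ts)" by fastforce
    have "set Ts \<subseteq> Tr"
    proof
      fix T assume "T \<in> set Ts"
      then have "real (length (enc T)) \<le> K * real n powr c"
        using that A unfolding alg_def alg_class_def by auto
      then have "length (enc T) \<le> L" unfolding L_def by (simp add: le_nat_floor)
      then show "T \<in> Tr" unfolding Tr_def by simp
    qed
    moreover have "length Ts = n" using that A unfolding alg_def alg_class_def by auto
    moreover have "set (map (\<lambda>j. {v\<in>V. v < b ! j}) [0..<n]) \<subseteq> D" unfolding D_def by auto
    ultimately show ?thesis unfolding S_def sig_def A by simp
  qed
  have key: "g A = g A'" if "A \<in> alg" "A' \<in> alg" "sig A = sig A'" for A A'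
  proof -
    obtain b Ts where A: "A = (b, Ts)" by fastforce
    obtain b' Ts' where A': "A' = (b', Ts')" by fastforce
    have Ts: "Ts' = Ts" using that(3) unfolding sig_def A A' by simp
    have m: "map (\<lambda>j. {v\<in>V. v < b ! j}) [0..<n] = map (\<lambda>j. {v\<in>V. v < b' ! j}) [0..<n]"
      using that(3) unfolding sig_def A A' by simp
    have P: "\<forall>v\<in>V. \<forall>j<n. (v < b!j) = (v < b'!j)"
    proof (intro ballI allI impI)
      fix v j assume "v \<in> V" "j < n"
      then have "{v\<in>V. v < b ! j} = {v\<in>V. v < b' ! j}" using m map_eq_conv by fastforce
      then show "(v < b!j) = (v < b'!j)" using \<open>v \<in> V\<close> by blast
    qed
    have props: "length b = n" "length b' = n" "\<forall>T\<in>set Ts. labels T \<subseteq> {1..n}" "length Ts = n"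
      using that(1,2) unfolding A A' alg_def alg_class_def by auto
    have "cost (b, Ts) x = cost (b', Ts) x" if "x \<in> X" for x
    proof (rule cost_cong[OF props(1,2) _ _ P props(3,4)])
      show "set x \<subseteq> V" unfolding V_def using that by auto
      show "length x = n" using that Xn by auto
    qed
    then show ?thesis unfolding g_def A A' Ts by auto
  qed
  define \<Phi> where "\<Phi> = (\<lambda>s. g (SOME A. A \<in> alg \<and> sig A = s))"
  have gsub: "g ` alg \<subseteq> \<Phi> ` S"
  proof
    fix y assume "y \<in> g ` alg"
    then obtain A where A: "A \<in> alg" "y = g A" by auto
    have ex: "\<exists>A'. A' \<in> alg \<and> sig A' = sig A" using A by blast
    have "\<Phi> (sig A) = g A" unfolding \<Phi>_def
      using key[OF someI_ex[OF ex, THEN conjunct1] A(1) someI_ex[OF ex, THEN conjunct2]] .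
    then show "y \<in> \<Phi> ` S" using A sigS by (metis image_eqI)
  qed
  have fin_g: "finite (g ` alg)" using finite_subset[OF gsub] finS by blast
  have cg: "card (g ` alg) \<le> card S"
    using card_mono[OF finite_imageI[OF finS] gsub] card_image_le[OF finS, of \<Phi>] by linarith
  obtain hh where hh: "\<And>T. T \<subseteq> X \<Longrightarrow> hh T \<in> cost_class enc K c n \<and> (\<forall>x \<in> X. (hh T x > r x \<longleftrightarrow> x \<in> T))"
    using r by metis
  define \<Psi> where "\<Psi> = (\<lambda>T. (\<lambda>x. if x \<in> X then hh T x else 0))"
  have inj\<Psi>: "inj_on \<Psi> (Pow X)"
  proof (rule inj_onI)
    fix T1 T2 assume T: "T1 \<in> Pow X" "T2 \<in> Pow X" "\<Psi> T1 = \<Psi> T2"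
    have "T1 = {x\<in>X. hh T1 x > r x}" using hh[of T1] T(1) by auto
    also have "\<dots> = {x\<in>X. hh T2 x > r x}"
      using T(3) unfolding \<Psi>_def by (metis (mono_tags, lifting))
    also have "\<dots> = T2" using hh[of T2] T(2) by auto
    finally show "T1 = T2" .
  qed
  have Psub: "\<Psi> ` Pow X \<subseteq> g ` alg"
  proof
    fix y assume "y \<in> \<Psi> ` Pow X"
    then obtain T where T: "T \<subseteq> X" "y = \<Psi> T" by auto
    then obtain A where "A \<in> alg" "hh T = (\<lambda>x. real (cost A x))"
      using hh[OF T(1)] unfolding cost_class_def alg_def by auto
    then show "y \<in> g ` alg" unfolding T(2) \<Psi>_def g_def by (intro image_eqI[where x=A]) auto
  qed
  have "2 ^ card X = card (Pow X)" using card_Pow[OF finX] by simp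
  also have "\<dots> = card (\<Psi> ` Pow X)" using card_image[OF inj\<Psi>] by simp
  also have "\<dots> \<le> card (g ` alg)" using card_mono[OF fin_g Psub] .
  also have "\<dots> \<le> card S" using cg .
  also have "\<dots> \<le> (4 ^ L) ^ n * (card X * n + 1) ^ n" using cS .
  finally show ?thesis unfolding L_def .
qed

lemma ln2_bounds: "1/2 \<le> ln (2::real)" "ln (2::real) \<le> 1"
proof -
  have "ln (1/2::real) \<le> 1/2 - 1" by (rule ln_le_minus_one) simp
  then show "1/2 \<le> ln (2::real)" by (simp add: ln_div)
  show "ln (2::real) \<le> 1" using ln_2_less_1 by simp
qed

lemma analytic:
  fixes m n :: nat and K c :: real
  assumes c: "c > 0" and K: "K > 0" and n: "n \<ge> 1"
    and ineq: "2 ^ m \<le> (4 ^ nat \<lfloor>K * real n powr c\<rfloor>) ^ n * (m * n + 1) ^ n"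
  shows "real m \<le> 4 * (2 * K + 3 + 2 / c) * real n powr (1 + c)"
proof (cases "m = 0")
  case True
  then show ?thesis using c K by simp
next
  case False
  define L where "L = nat \<lfloor>K * real n powr c\<rfloor>"
  define x where "x = real m"
  define y where "y = real n"
  have x1: "x \<ge> 1" using False unfolding x_def by simp
  have y1: "y \<ge> 1" using n unfolding y_def by simp
  have xy: "1 \<le> x * y" using mult_mono[OF x1 y1] x1 by simp
  have yc: "y powr c \<ge> 1" using y1 c by (simp add: ge_one_powr_ge_zero)
  have L: "real L \<le> K * y powr c"
  proof -
    have "0 \<le> K * y powr c" using K y1 by simp
    then show ?thesis unfolding L_def y_def by linarith
  qed
  have "real (2 ^ m) \<le> real ((4 ^ L) ^ n * (m * n + 1) ^ n)" using ineq unfolding L_def by linarith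
  then have "(2::real) ^ m \<le> (4 ^ L) ^ n * (x * y + 1) ^ n" unfolding x_def y_def by (simp add: add.commute)
  moreover have pos: "0 < ((4::real) ^ L) ^ n * (x * y + 1) ^ n"
  proof -
    have "0 < x * y + 1" using x1 y1 by (simp add: add_pos_nonneg)
    then show ?thesis by simp
  qed
  ultimately have "ln ((2::real) ^ m) \<le> ln ((4 ^ L) ^ n * (x * y + 1) ^ n)"
    by (subst ln_le_cancel_iff) auto
  also have "\<dots> = real n * (real L * ln 4) + real n * ln (x * y + 1)"
  proof -
    have "0 < x * y + 1" using x1 y1 by (simp add: add_pos_nonneg)
    then show ?thesis by (simp add: ln_mult ln_realpow)
  qed
  finally have l1: "x * ln 2 \<le> y * (real L * ln 4) + y * ln (x * y + 1)"
    unfolding x_def y_def by (simp add: ln_realpow)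
  have ln4: "ln (4::real) = 2 * ln 2"
    using ln_realpow[of 2 2] by simp
  have a1: "x / 2 \<le> x * ln 2" using ln2_bounds(1) x1 by simp
  have a2: "y * (real L * ln 4) \<le> 2 * K * (y * y powr c)"
  proof -
    have "y * (real L * ln 4) = 2 * ln 2 * (y * real L)" using ln4 by simp
    also have "\<dots> \<le> 2 * 1 * (y * real L)" using ln2_bounds(2) y1
      by (intro mult_right_mono) auto
    also have "\<dots> \<le> 2 * (y * (K * y powr c))" using L y1 by simp
    finally show ?thesis by (simp add: algebra_simps)
  qed
  have a3: "ln (x * y + 1) \<le> ln 2 + ln (x / y) + 2 * ln y"
  proof -
    have "ln (x * y + 1) \<le> ln (2 * (x / y) * (y * y))"
      using x1 y1 xy by (subst ln_le_cancel_iff) (auto simp: field_simps)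
    also have "\<dots> = ln 2 + ln (x / y) + 2 * ln y"
      using x1 y1 by (simp add: ln_mult ln_div)
    finally show ?thesis .
  qed
  have a4: "ln (x / y) \<le> x / (4 * y) + 2"
  proof -
    have "ln (x / (4 * y)) \<le> x / (4 * y) - 1" using x1 y1 by (intro ln_le_minus_one) simp
    moreover have "ln (x / y) = ln (x / (4 * y)) + ln 4" using x1 y1
      by (simp add: ln_div ln_mult)
    ultimately show ?thesis using ln4 ln_2_less_1 by linarith
  qed
  have a5: "ln y \<le> y powr c / c"
  proof -
    have e: "c * ln y = ln (y powr c)" using y1 by (simp add: ln_powr)
    have "ln (y powr c) < y powr c" using yc y1 by (intro ln_less_self) simp
    then have "c * ln y < y powr c" unfolding e .
    then show ?thesis using c by (simp add: field_simps)
  qed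
  have "y * ln (x * y + 1) \<le> y * (1 + (x / (4 * y) + 2) + 2 * (y powr c / c))"
    using a3 a4 a5 ln2_bounds(2) y1 by (intro mult_left_mono) auto
  also have "\<dots> = 3 * y + x / 4 + 2 / c * (y * y powr c)" using y1 by (simp add: field_simps)
  finally have a6: "y * ln (x * y + 1) \<le> 3 * y + x / 4 + 2 / c * (y * y powr c)" .
  have yy: "y * y powr c = y powr (1 + c)" using y1 by (simp add: powr_add)
  have y3: "y \<le> y * y powr c" using y1 yc by simp
  have "x / 4 \<le> 2 * K * (y * y powr c) + 3 * y + 2 / c * (y * y powr c)"
    using l1 a1 a2 a6 by linarith
  also have "\<dots> \<le> (2 * K + 3 + 2 / c) * (y * y powr c)"
    using y3 by (simp add: algebra_simps)
  finally have "x \<le> 4 * ((2 * K + 3 + 2 / c) * y powr (1 + c))" unfolding yy by simp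
  then show ?thesis unfolding x_def y_def by (simp only: mult.assoc)
qed

theorem mainTheorem4:
  fixes c :: real and enc :: "stree \<Rightarrow> bool list"
  assumes "c > 0" and "inj enc"
  shows "\<forall>K > 0. \<exists>C. \<forall>n \<ge> 1.
           pseudo_dim {x :: real list. length x = n} (cost_class enc K c n)
             \<le> ereal (C * real n powr (1 + c))"
proof (intro allI impI)
  fix K :: real assume K: "K > 0"
  show "\<exists>C. \<forall>n \<ge> 1. pseudo_dim {x :: real list. length x = n} (cost_class enc K c n)
             \<le> ereal (C * real n powr (1 + c))"
  proof (intro exI allI impI)
    fix n :: nat assume n: "n \<ge> 1"
    show "pseudo_dim {x :: real list. length x = n} (cost_class enc K c n)
             \<le> ereal (4 * (2 * K + 3 + 2 / c) * real n powr (1 + c))"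
      unfolding pseudo_dim_def
    proof (rule SUP_least)
      fix X :: "real list set"
      assume "X \<in> {X. X \<subseteq> {x. length x = n} \<and> shatters (cost_class enc K c n) X}"
      then have X: "X \<subseteq> {x. length x = n}" "shatters (cost_class enc K c n) X" by auto
      have "real (card X) \<le> 4 * (2 * K + 3 + 2 / c) * real n powr (1 + c)"
        by (rule analytic[OF assms(1) K n shatter_count[OF assms(2) X]])
      then show "ereal (real (card X)) \<le> ereal (4 * (2 * K + 3 + 2 / c) * real n powr (1 + c))"
        by simp
    qed
  qed
qed

end
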